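(* The PIR capacity of the star graph $S_N$ on $N$ vertices satisfies $\mathscr{C}(S_N)\ge \frac{2}{N}$.
   Context: The star graph $S_N$ has $N$ vertices (servers), one (server $N$) of degree $N-1$ and the others of degree $1$; there are $K=N-1$ files, file $W_i$ stored on leaf server $i$ and on server $N$. Graph-based PIR model: files are independent, each uniform on $\mathbb{F}_2^L$; a user wants $W_\theta$, $\theta$ uniform on $[K]$ and independent of the files; it sends queries $Q_1,\dots,Q_N$ (independent of the files); server $i$ answers $A_i$, a deterministic function of $Q_i$ and the files on it. Reliability: $W_\theta$ is determined by all answers and queries. Privacy: $H(\theta\mid Q_i,W_{S_i})=\log K$ for every $i$, $W_{S_i}$ being the files on server $i$. The rate is $L/\sum_i H(A_i)$; the PIR capacity is the supremum of rates over all schemes and file lengths $L$. *)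

theory Defs
  imports "HOL-Probability.Product_PMF"
begin

definition ent :: "'a pmf \<Rightarrow> real" where
  "ent p = - (\<Sum>x\<in>set_pmf p. pmf p x * log 2 (pmf p x))"

definition cond_ent :: "('c \<Rightarrow> 'a) \<Rightarrow> ('c \<Rightarrow> 'b) \<Rightarrow> 'c pmf \<Rightarrow> real" where
  "cond_ent f g p = ent (map_pmf (\<lambda>x. (f x, g x)) p) - ent (map_pmf g p)"

text \<open>Star graph S_N: servers 1..N, server N is the centre; files 1..K with K = N-1.
  File k is stored on leaf server k and on server N.\<close>
definition star_files :: "nat \<Rightarrow> nat" where
  "star_files N = N - 1"

definition star_storage :: "nat \<Rightarrow> nat \<Rightarrow> nat set" where
  "star_storage N i = (if i = N then {1..star_files N} else {i})"

definition file_pmf :: "nat \<Rightarrow> nat \<Rightarrow> (nat \<Rightarrow> bool list) pmf" where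
  "file_pmf K L = Pi_pmf {1..K} [] (\<lambda>_. pmf_of_set {xs. length xs = L})"

definition files_on :: "nat \<Rightarrow> nat \<Rightarrow> (nat \<Rightarrow> bool list) \<Rightarrow> (nat \<Rightarrow> bool list)" where
  "files_on N i W = (\<lambda>k. if k \<in> star_storage N i then W k else [])"

text \<open>A scheme: qd is the joint law of (theta, Q) with Q i the query to server i;
  ans i q V is the (deterministic) answer of server i to query q given its files V;
  dec is the user's decoder applied to all queries and all answers.
  The joint law of ((theta,Q),W) is qd \<times> files (queries independent of the files).\<close>
definition joint :: "nat \<Rightarrow> nat \<Rightarrow> (nat \<times> (nat \<Rightarrow> nat)) pmf \<Rightarrow> ((nat \<times> (nat \<Rightarrow> nat)) \<times> (nat \<Rightarrow> bool list)) pmf" where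
  "joint N L qd = pair_pmf qd (file_pmf (star_files N) L)"

definition answer :: "nat \<Rightarrow> (nat \<Rightarrow> nat \<Rightarrow> (nat \<Rightarrow> bool list) \<Rightarrow> nat) \<Rightarrow> nat \<Rightarrow> (nat \<Rightarrow> nat) \<Rightarrow> (nat \<Rightarrow> bool list) \<Rightarrow> nat" where
  "answer N ans i Q W = ans i (Q i) (files_on N i W)"

definition all_queries :: "nat \<Rightarrow> (nat \<Rightarrow> nat) \<Rightarrow> (nat \<Rightarrow> nat)" where
  "all_queries N Q = (\<lambda>i. if i \<in> {1..N} then Q i else 0)"

definition all_answers :: "nat \<Rightarrow> (nat \<Rightarrow> nat \<Rightarrow> (nat \<Rightarrow> bool list) \<Rightarrow> nat) \<Rightarrow> (nat \<Rightarrow> nat) \<Rightarrow> (nat \<Rightarrow> bool list) \<Rightarrow> (nat \<Rightarrow> nat)" where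
  "all_answers N ans Q W = (\<lambda>i. if i \<in> {1..N} then answer N ans i Q W else 0)"

definition valid_star_scheme ::
  "nat \<Rightarrow> nat \<Rightarrow> (nat \<times> (nat \<Rightarrow> nat)) pmf \<Rightarrow> (nat \<Rightarrow> nat \<Rightarrow> (nat \<Rightarrow> bool list) \<Rightarrow> nat)
     \<Rightarrow> ((nat \<Rightarrow> nat) \<Rightarrow> (nat \<Rightarrow> nat) \<Rightarrow> bool list) \<Rightarrow> bool" where
  "valid_star_scheme N L qd ans dec \<longleftrightarrow>
     finite (set_pmf qd) \<and>
     map_pmf fst qd = pmf_of_set {1..star_files N} \<and>
     (\<forall>((\<theta>, Q), W) \<in> set_pmf (joint N L qd).
        dec (all_queries N Q) (all_answers N ans Q W) = W \<theta>) \<and>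
     (\<forall>i\<in>{1..N}. cond_ent (\<lambda>((\<theta>, Q), W). \<theta>) (\<lambda>((\<theta>, Q), W). (Q i, files_on N i W)) (joint N L qd)
                    = log 2 (real (star_files N)))"

definition star_rate :: "nat \<Rightarrow> nat \<Rightarrow> (nat \<times> (nat \<Rightarrow> nat)) pmf \<Rightarrow> (nat \<Rightarrow> nat \<Rightarrow> (nat \<Rightarrow> bool list) \<Rightarrow> nat) \<Rightarrow> real" where
  "star_rate N L qd ans =
     real L / (\<Sum>i=1..N. ent (map_pmf (\<lambda>((\<theta>, Q), W). answer N ans i Q W) (joint N L qd)))"

definition star_pir_capacity :: "nat \<Rightarrow> ereal" where
  "star_pir_capacity N = Sup {ereal (star_rate N L qd ans) | L qd ans dec.
       L \<ge> 1 \<and> valid_star_scheme N L qd ans dec}"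

end

theory Submission imports Defs "HOL-Library.Nat_Bijection" begin

lemma ent_pmf_of_set:
  assumes "finite S" "S \<noteq> {}"
  shows "ent (pmf_of_set S) = log 2 (real (card S))"
proof -
  have c: "card S > 0" using assms by (simp add: card_gt_0_iff)
  have "ent (pmf_of_set S) = - (\<Sum>x\<in>S. (1 / real (card S)) * log 2 (1 / real (card S)))"
    unfolding ent_def using assms by (simp add: pmf_of_set)
  also have "\<dots> = - log 2 (1 / real (card S))" using c by simp
  also have "\<dots> = log 2 (real (card S))" using c by (simp add: log_divide)
  finally show ?thesis .
qed

lemma ent_pair:
  assumes "finite (set_pmf p)" "finite (set_pmf q)"
  shows "ent (pair_pmf p q) = ent p + ent q"
proof -
  have sp: "(\<Sum>x\<in>set_pmf p. pmf p x) = 1" using assms sum_pmf_eq_1 by blast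
  have sq: "(\<Sum>x\<in>set_pmf q. pmf q x) = 1" using assms sum_pmf_eq_1 by blast
  have "(\<Sum>z\<in>set_pmf (pair_pmf p q). pmf (pair_pmf p q) z * log 2 (pmf (pair_pmf p q) z))
      = (\<Sum>a\<in>set_pmf p. \<Sum>b\<in>set_pmf q. pmf p a * pmf q b * (log 2 (pmf p a) + log 2 (pmf q b)))"
    unfolding set_pair_pmf sum.cartesian_product
    by (intro sum.cong refl) (auto simp: pmf_pair log_mult_pos pmf_positive)
  also have "\<dots> = (\<Sum>a\<in>set_pmf p. pmf p a * log 2 (pmf p a) * (\<Sum>b\<in>set_pmf q. pmf q b))
       + (\<Sum>a\<in>set_pmf p. pmf p a) * (\<Sum>b\<in>set_pmf q. pmf q b * log 2 (pmf q b))"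
    by (simp add: algebra_simps sum.distrib sum_distrib_left sum_distrib_right sum.swap[of _ "set_pmf q"])
  finally show ?thesis unfolding ent_def using sp sq by simp
qed

lemma map_pair_const:
  assumes "\<And>x. x \<in> set_pmf p \<Longrightarrow> map_pmf (g x) q = D"
  shows "map_pmf (\<lambda>(x,y). g x y) (pair_pmf p q) = D"
proof -
  have "map_pmf (\<lambda>(x,y). g x y) (pair_pmf p q) = bind_pmf p (\<lambda>x. map_pmf (g x) q)"
    unfolding pair_pmf_def map_bind_pmf by (simp add: map_pmf_def bind_return_pmf)
  also have "\<dots> = bind_pmf p (\<lambda>x. D)" using assms by (intro bind_pmf_cong) auto
  finally show ?thesis by simp
qed

lemma map_pair_indep:
  assumes "\<And>a. a \<in> set_pmf U \<Longrightarrow> map_pmf (\<lambda>(r,w). G a r w) (pair_pmf R F) = D"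
  shows "map_pmf (\<lambda>((a,r),w). (a, G a r w)) (pair_pmf (pair_pmf U R) F) = pair_pmf U D"
proof -
  have "map_pmf (\<lambda>((a,r),w). (a, G a r w)) (pair_pmf (pair_pmf U R) F)
     = bind_pmf U (\<lambda>a. map_pmf (Pair a) (map_pmf (\<lambda>(r,w). G a r w) (pair_pmf R F)))"
    unfolding pair_pmf_def map_bind_pmf
    by (simp add: map_pmf_def bind_return_pmf bind_assoc_pmf)
  also have "\<dots> = bind_pmf U (\<lambda>a. map_pmf (Pair a) D)" using assms by (intro bind_pmf_cong) auto
  also have "\<dots> = pair_pmf U D" unfolding pair_pmf_def by (simp add: map_pmf_def)
  finally show ?thesis .
qed

lemma unif01:
  fixes D :: "nat pmf"
  assumes "set_pmf D \<subseteq> {0,1}" "map_pmf (\<lambda>v. 1 - v) D = D"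
  shows "D = pmf_of_set {0,1}"
proof -
  have "pmf D 1 = pmf (map_pmf (\<lambda>v. 1 - v) D) 1" using assms by simp
  also have "\<dots> = measure D ((\<lambda>v. 1 - v) -` {1})" by (simp add: pmf_map)
  also have "(\<lambda>v::nat. 1 - v) -` {1} = {0}" by auto
  finally have e: "pmf D 1 = pmf D 0" by (simp add: measure_pmf_single)
  have "(\<Sum>x\<in>{0,1}. pmf D x) = 1" using assms by (intro sum_pmf_eq_1) auto
  hence s: "pmf D 0 + pmf D 1 = 1" by simp
  show ?thesis
  proof (rule pmf_eqI)
    fix x
    show "pmf D x = pmf (pmf_of_set {0,1}) x"
    proof (cases "x \<in> {0,1}")
      case True then show ?thesis using e s by (auto simp: pmf_of_set)
    next
      case False then have "x \<notin> set_pmf D" using assms by auto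
      then show ?thesis using False by (simp add: set_pmf_iff pmf_of_set)
    qed
  qed
qed

lemma unif_by_inv:
  fixes g :: "'a \<Rightarrow> nat"
  assumes "finite S" "S \<noteq> {}" "\<And>x. x \<in> S \<Longrightarrow> \<sigma> x \<in> S" "\<And>x. x \<in> S \<Longrightarrow> \<sigma> (\<sigma> x) = x"
    "\<And>x. x \<in> S \<Longrightarrow> g x \<in> {0,1}" "\<And>x. x \<in> S \<Longrightarrow> g (\<sigma> x) = 1 - g x"
  shows "map_pmf g (pmf_of_set S) = pmf_of_set {0,1}"
proof (rule unif01)
  have inj: "inj_on \<sigma> S" by (metis assms(4) inj_onI)
  have im: "\<sigma> ` S = S" using assms(3,4) by (auto, metis image_eqI)
  have ms: "map_pmf \<sigma> (pmf_of_set S) = pmf_of_set S"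
    using map_pmf_of_set_inj[OF inj assms(2,1)] im by simp
  show "set_pmf (map_pmf g (pmf_of_set S)) \<subseteq> {0,1}" proof
    fix v assume "v \<in> set_pmf (map_pmf g (pmf_of_set S))"
    then obtain x where x: "x \<in> S" "v = g x" using assms(1,2) by auto
    have "g x \<in> {0,1}" by (rule assms(5)[OF x(1)])
    then show "v \<in> {0,1}" using x(2) by simp
  qed
  have "map_pmf (\<lambda>v. 1 - v) (map_pmf g (pmf_of_set S)) = map_pmf (\<lambda>x. g (\<sigma> x)) (pmf_of_set S)"
    unfolding map_pmf_comp using assms by (intro map_pmf_cong) auto
  also have "\<dots> = map_pmf g (map_pmf \<sigma> (pmf_of_set S))" by (simp add: map_pmf_comp)
  finally show "map_pmf (\<lambda>v. 1 - v) (map_pmf g (pmf_of_set S)) = map_pmf g (pmf_of_set S)"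
    using ms by simp
qed


definition Rset :: "nat \<Rightarrow> (nat \<Rightarrow> nat) set" where
  "Rset K = PiE_dflt {1..K} 0 (\<lambda>_. {0,1})"
definition FS :: "nat \<Rightarrow> (nat \<Rightarrow> bool list) set" where
  "FS K = PiE_dflt {1..K} [] (\<lambda>_. {xs. length xs = 2})"
definition flp :: "nat \<Rightarrow> (nat \<Rightarrow> nat) \<Rightarrow> (nat \<Rightarrow> nat)" where
  "flp a r = r(a := 1 - r a)"
definition enc :: "nat \<Rightarrow> (nat \<Rightarrow> nat) \<Rightarrow> nat" where
  "enc K r = set_encode {j\<in>{1..K}. r j = 1}"
definition qf :: "nat \<Rightarrow> nat \<Rightarrow> (nat \<Rightarrow> nat) \<Rightarrow> (nat \<Rightarrow> nat)" where
  "qf N a r = (\<lambda>i. if i = N then enc (N - 1) (flp a r) else r i)"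
definition qdist :: "nat \<Rightarrow> (nat \<times> (nat \<Rightarrow> nat)) pmf" where
  "qdist N = map_pmf (\<lambda>(a,r). (a, qf N a r)) (pair_pmf (pmf_of_set {1..N-1}) (pmf_of_set (Rset (N-1))))"
definition bitv :: "nat \<Rightarrow> bool list \<Rightarrow> nat" where
  "bitv q w = (if w ! q then 1 else 0)"
definition sans :: "nat \<Rightarrow> nat \<Rightarrow> nat \<Rightarrow> (nat \<Rightarrow> bool list) \<Rightarrow> nat" where
  "sans N i q V = (if i = N then (\<Sum>j=1..N-1. bitv (if j \<in> set_decode q then 1 else 0) (V j)) mod 2
                   else bitv q (V i))"
definition sdec :: "nat \<Rightarrow> (nat \<Rightarrow> nat) \<Rightarrow> (nat \<Rightarrow> nat) \<Rightarrow> bool list" where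
  "sdec N Qs As = (let th = (LEAST j. j \<in> {1..N-1} \<and> ((j \<in> set_decode (Qs N)) = (Qs j = 0)));
                       rt = Qs th; bA = As th;
                       bB = (As N + (\<Sum>j\<in>{1..N-1}-{th}. As j)) mod 2
                   in if rt = 0 then [bA = 1, bB = 1] else [bB = 1, bA = 1])"
definition flipW :: "nat \<Rightarrow> nat \<Rightarrow> (nat \<Rightarrow> bool list) \<Rightarrow> (nat \<Rightarrow> bool list)" where
  "flipW i q W = W(i := (W i)[q := \<not> (W i ! q)])"

lemma finite_Rset: "finite (Rset K)" "Rset K \<noteq> {}"
  unfolding Rset_def by (auto intro!: finite_PiE_dflt)

lemma finite_len2: "finite {xs::bool list. length xs = 2}"
  using finite_lists_length_eq[of "UNIV::bool set" 2] by simp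

lemma len2_ne: "{xs::bool list. length xs = 2} \<noteq> {}"
  by (metis (mono_tags, lifting) empty_Collect_eq length_replicate)

lemma finite_FS: "finite (FS K)" "FS K \<noteq> {}"
  unfolding FS_def using finite_len2 len2_ne by (auto intro!: finite_PiE_dflt)

lemma file_pmf_eq: "file_pmf K 2 = pmf_of_set (FS K)"
  unfolding file_pmf_def FS_def using finite_len2 len2_ne by (intro Pi_pmf_of_set) auto

lemma flp_Rset: "a \<in> {1..K} \<Longrightarrow> r \<in> Rset K \<Longrightarrow> flp a r \<in> Rset K"
  unfolding Rset_def PiE_dflt_def flp_def by auto

lemma flp_flp: "r \<in> Rset K \<Longrightarrow> a \<in> {1..K} \<Longrightarrow> flp a (flp a r) = r"
  unfolding Rset_def PiE_dflt_def flp_def by (rule ext) auto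

lemma map_flp: "a \<in> {1..K} \<Longrightarrow> map_pmf (flp a) (pmf_of_set (Rset K)) = pmf_of_set (Rset K)"
proof -
  assume a: "a \<in> {1..K}"
  have inj: "inj_on (flp a) (Rset K)" by (metis a flp_flp inj_onI)
  have "flp a ` Rset K = Rset K" using a flp_Rset flp_flp by (auto, metis image_eqI flp_Rset)
  then show ?thesis using map_pmf_of_set_inj[OF inj finite_Rset(2) finite_Rset(1)] by simp
qed

lemma flipW_FS: "i \<in> {1..K} \<Longrightarrow> q < 2 \<Longrightarrow> W \<in> FS K \<Longrightarrow> flipW i q W \<in> FS K"
  unfolding FS_def PiE_dflt_def flipW_def by auto

lemma flipW_flipW: "i \<in> {1..K} \<Longrightarrow> q < 2 \<Longrightarrow> W \<in> FS K \<Longrightarrow> flipW i q (flipW i q W) = W"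
  unfolding FS_def PiE_dflt_def flipW_def by (rule ext) auto

lemma flipW_bit: "i \<in> {1..K} \<Longrightarrow> q < 2 \<Longrightarrow> W \<in> FS K \<Longrightarrow> bitv q (flipW i q W i) = 1 - bitv q (W i)"
  unfolding FS_def PiE_dflt_def flipW_def bitv_def by auto

lemma flipW_other: "j \<noteq> i \<Longrightarrow> flipW i q W j = W j"
  unfolding flipW_def by simp

lemma bitv01: "bitv q w \<in> {0,1}" unfolding bitv_def by auto


lemma joint_eq:
  "joint N 2 (qdist N) = map_pmf (\<lambda>((a,r),W). ((a, qf N a r), W))
     (pair_pmf (pair_pmf (pmf_of_set {1..N-1}) (pmf_of_set (Rset (N-1)))) (pmf_of_set (FS (N-1))))"
  unfolding joint_def qdist_def star_files_def file_pmf_eq pair_map_pmf1 map_pmf_comp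
  by (intro map_pmf_cong refl) (auto simp: apfst_def map_prod_def)

lemma set_joint:
  assumes "x \<in> set_pmf (joint N 2 (qdist N))" "N \<ge> 2"
  shows "\<exists>a r W. x = ((a, qf N a r), W) \<and> a \<in> {1..N-1} \<and> r \<in> Rset (N-1) \<and> W \<in> FS (N-1)"
  using assms unfolding joint_eq using finite_Rset finite_FS by auto

lemma set_qdist:
  assumes "x \<in> set_pmf (qdist N)" "N \<ge> 2"
  shows "\<exists>a r. x = (a, qf N a r) \<and> a \<in> {1..N-1} \<and> r \<in> Rset (N-1)"
  using assms unfolding qdist_def using finite_Rset by auto

lemma enc_dec: "set_decode (enc K r) = {j\<in>{1..K}. r j = 1}"
  unfolding enc_def by simp

lemma answer_unif:
  assumes N: "N \<ge> 2" and i: "i \<in> {1..N}"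
  shows "map_pmf (\<lambda>((\<theta>, Q), W). answer N (sans N) i Q W) (joint N 2 (qdist N)) = pmf_of_set {0,1}"
proof -
  define K where "K = N - 1"
  have K1: "1 \<in> {1..K}" using N unfolding K_def by auto
  have "map_pmf (\<lambda>((\<theta>, Q), W). answer N (sans N) i Q W) (joint N 2 (qdist N))
      = map_pmf (\<lambda>(x, W). sans N i (snd x i) (files_on N i W)) (pair_pmf (qdist N) (pmf_of_set (FS K)))"
    unfolding joint_def file_pmf_eq star_files_def K_def answer_def
    by (intro map_pmf_cong refl) auto
  also have "\<dots> = pmf_of_set {0,1}"
  proof (rule map_pair_const)
    fix x assume "x \<in> set_pmf (qdist N)"
    then obtain a r where x: "x = (a, qf N a r)" "a \<in> {1..K}" "r \<in> Rset K"
      using set_qdist N unfolding K_def by blast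
    show "map_pmf (\<lambda>W. sans N i (snd x i) (files_on N i W)) (pmf_of_set (FS K)) = pmf_of_set {0, 1}"
    proof (cases "i = N")
      case True
      define c where "c j = (if j \<in> {j\<in>{1..K}. flp a r j = 1} then 1 else 0::nat)" for j
      have g: "sans N i (snd x i) (files_on N i W) = (\<Sum>j=1..K. bitv (c j) (W j)) mod 2" for W
        unfolding sans_def x True qf_def enc_dec files_on_def star_storage_def star_files_def c_def K_def
        by (auto simp: enc_dec intro!: sum.cong arg_cong[where f="\<lambda>x. x mod 2"])
      have c1: "c 1 < 2" unfolding c_def by auto
      have sp: "(\<Sum>j=1..K. bitv (c j) (W j)) = bitv (c 1) (W 1) + (\<Sum>j\<in>{1..K}-{1}. bitv (c j) (W j))" for W
        using K1 by (intro sum.remove) auto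
      show ?thesis unfolding g
      proof (rule unif_by_inv[where \<sigma>="flipW 1 (c 1)"])
        show "finite (FS K)" "FS K \<noteq> {}" using finite_FS by auto
        fix W assume W: "W \<in> FS K"
        show "flipW 1 (c 1) W \<in> FS K" using flipW_FS[OF K1 c1 W] .
        show "flipW 1 (c 1) (flipW 1 (c 1) W) = W" using flipW_flipW[OF K1 c1 W] .
        show "(\<Sum>j = 1..K. bitv (c j) (W j)) mod 2 \<in> {0, 1}" by auto
        have o: "(\<Sum>j\<in>{1..K}-{1}. bitv (c j) (flipW 1 (c 1) W j)) = (\<Sum>j\<in>{1..K}-{1}. bitv (c j) (W j))"
          by (intro sum.cong refl) (simp add: flipW_other)
        have b: "bitv (c 1) (W 1) \<in> {0,1}" by (rule bitv01)
        show "(\<Sum>j = 1..K. bitv (c j) (flipW 1 (c 1) W j)) mod 2 = 1 - (\<Sum>j = 1..K. bitv (c j) (W j)) mod 2"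
          unfolding sp o flipW_bit[OF K1 c1 W] using b by auto presburger+
      qed
    next
      case False
      then have iK: "i \<in> {1..K}" using i unfolding K_def by auto
      have ri: "r i < 2" using x(3) iK unfolding Rset_def PiE_dflt_def by auto
      have g: "sans N i (snd x i) (files_on N i W) = bitv (r i) (W i)" for W
        unfolding sans_def x qf_def files_on_def star_storage_def using False by simp
      show ?thesis unfolding g
      proof (rule unif_by_inv[where \<sigma>="flipW i (r i)"])
        show "finite (FS K)" "FS K \<noteq> {}" using finite_FS by auto
        fix W assume W: "W \<in> FS K"
        show "flipW i (r i) W \<in> FS K" using flipW_FS[OF iK ri W] .
        show "flipW i (r i) (flipW i (r i) W) = W" using flipW_flipW[OF iK ri W] .
        show "bitv (r i) (W i) \<in> {0, 1}" by (rule bitv01)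
        show "bitv (r i) (flipW i (r i) W i) = 1 - bitv (r i) (W i)" using flipW_bit[OF iK ri W] .
      qed
    qed
  qed
  finally show ?thesis .
qed


lemma privacy:
  assumes N: "N \<ge> 2" and i: "i \<in> {1..N}"
  shows "cond_ent (\<lambda>((\<theta>, Q), W). \<theta>) (\<lambda>((\<theta>, Q), W). (Q i, files_on N i W)) (joint N 2 (qdist N))
         = log 2 (real (star_files N))"
proof -
  define K where "K = N - 1"
  define U where "U = pmf_of_set {1..K}"
  define R where "R = pmf_of_set (Rset K)"
  define F where "F = pmf_of_set (FS K)"
  define D where "D = map_pmf (\<lambda>(r,W). (if i = N then enc K r else r i, files_on N i W)) (pair_pmf R F)"
  have J: "joint N 2 (qdist N) = map_pmf (\<lambda>((a,r),W). ((a, qf N a r), W)) (pair_pmf (pair_pmf U R) F)"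
    unfolding U_def R_def F_def K_def by (rule joint_eq)
  have setU: "set_pmf U = {1..K}" unfolding U_def using N K_def by auto
  have indep: "map_pmf (\<lambda>x. ((\<lambda>((\<theta>, Q), W). \<theta>) x, (\<lambda>((\<theta>, Q), W). (Q i, files_on N i W)) x)) (joint N 2 (qdist N))
      = pair_pmf U D"
  proof -
    have "map_pmf (\<lambda>x. ((\<lambda>((\<theta>, Q), W). \<theta>) x, (\<lambda>((\<theta>, Q), W). (Q i, files_on N i W)) x)) (joint N 2 (qdist N))
        = map_pmf (\<lambda>((a,r),w). (a, (qf N a r i, files_on N i w))) (pair_pmf (pair_pmf U R) F)"
      unfolding J map_pmf_comp by (intro map_pmf_cong refl) auto
    also have "\<dots> = pair_pmf U D"
    proof (rule map_pair_indep)
      fix a assume "a \<in> set_pmf U"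
      then have a: "a \<in> {1..K}" using setU by simp
      show "map_pmf (\<lambda>(r, w). (qf N a r i, files_on N i w)) (pair_pmf R F) = D"
      proof (cases "i = N")
        case True
        have "map_pmf (\<lambda>(r, w). (qf N a r i, files_on N i w)) (pair_pmf R F)
            = map_pmf (\<lambda>(r, w). (enc K r, files_on N i w)) (map_pmf (apfst (flp a)) (pair_pmf R F))"
          unfolding map_pmf_comp qf_def True K_def by (intro map_pmf_cong refl) auto
        also have "\<dots> = D" unfolding D_def pair_map_pmf1[symmetric] R_def using map_flp[OF a] True by simp
        finally show ?thesis .
      next
        case False
        then show ?thesis unfolding D_def qf_def by (intro map_pmf_cong refl) auto
      qed
    qed
    finally show ?thesis .
  qed
  have marg: "map_pmf (\<lambda>((\<theta>, Q), W). (Q i, files_on N i W)) (joint N 2 (qdist N)) = D"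
  proof -
    have "map_pmf (\<lambda>((\<theta>, Q), W). (Q i, files_on N i W)) (joint N 2 (qdist N))
        = map_pmf snd (map_pmf (\<lambda>x. ((\<lambda>((\<theta>, Q), W). \<theta>) x, (\<lambda>((\<theta>, Q), W). (Q i, files_on N i W)) x)) (joint N 2 (qdist N)))"
      unfolding map_pmf_comp by (intro map_pmf_cong refl) auto
    then show ?thesis unfolding indep map_snd_pair_pmf .
  qed
  have finU: "finite (set_pmf U)" using setU by simp
  have finD: "finite (set_pmf D)" unfolding D_def R_def F_def using finite_Rset finite_FS by simp
  have "ent U = log 2 (real K)" unfolding U_def using N K_def by (simp add: ent_pmf_of_set)
  then show ?thesis unfolding cond_ent_def indep marg ent_pair[OF finU finD] star_files_def K_def by simp
qed


lemma mod2_aux: "(x::nat) \<in> {0,1} \<Longrightarrow> ((x + s) mod 2 + s) mod 2 = x"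
  by auto presburger+

lemma reliable:
  assumes N: "N \<ge> 2" and a: "a \<in> {1..N-1}" and r: "r \<in> Rset (N-1)" and W: "W \<in> FS (N-1)"
  shows "sdec N (all_queries N (qf N a r)) (all_answers N (sans N) (qf N a r) W) = W a"
proof -
  define K where "K = N - 1"
  define Qs where "Qs = all_queries N (qf N a r)"
  define As where "As = all_answers N (sans N) (qf N a r) W"
  have a': "a \<in> {1..K}" using a K_def by simp
  have r01: "j \<in> {1..K} \<Longrightarrow> r j = 0 \<or> r j = 1" for j using r unfolding K_def Rset_def PiE_dflt_def by auto
  have QN: "Qs N = enc K (flp a r)" unfolding Qs_def all_queries_def qf_def K_def using N by simp
  have Qj: "j \<in> {1..K} \<Longrightarrow> Qs j = r j" for j unfolding Qs_def all_queries_def qf_def K_def by auto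
  have C: "set_decode (Qs N) = {j\<in>{1..K}. flp a r j = 1}" unfolding QN enc_dec ..
  have th: "(LEAST j. j \<in> {1..N-1} \<and> ((j \<in> set_decode (Qs N)) = (Qs j = 0))) = a"
  proof (rule Least_equality)
    show "a \<in> {1..N-1} \<and> ((a \<in> set_decode (Qs N)) = (Qs a = 0))"
      using a' r01[OF a'] unfolding C Qj[OF a'] K_def flp_def by auto
  next
    fix y assume y: "y \<in> {1..N-1} \<and> ((y \<in> set_decode (Qs N)) = (Qs y = 0))"
    then have yK: "y \<in> {1..K}" unfolding K_def by simp
    show "a \<le> y"
    proof (rule ccontr)
      assume "\<not> a \<le> y" then have "y \<noteq> a" by simp
      then show False using y r01[OF yK] unfolding C Qj[OF yK] flp_def K_def by auto
    qed
  qed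
  have Aj: "j \<in> {1..K} \<Longrightarrow> As j = bitv (r j) (W j)" for j
  proof -
    assume j: "j \<in> {1..K}"
    then have "j \<noteq> N" "j \<in> {1..N}" unfolding K_def by auto
    then show ?thesis
      by (simp add: As_def all_answers_def answer_def sans_def qf_def files_on_def star_storage_def)
  qed
  have AN: "As N = (\<Sum>j=1..K. bitv (flp a r j) (W j)) mod 2"
  proof -
    have "As N = (\<Sum>j=1..K. bitv (if j \<in> set_decode (Qs N) then 1 else 0) (W j)) mod 2"
    proof -
      have "As N = sans N N (Qs N) (files_on N N W)"
        using N by (simp add: As_def all_answers_def answer_def Qs_def all_queries_def)
      also have "\<dots> = (\<Sum>j=1..K. bitv (if j \<in> set_decode (Qs N) then 1 else 0) (files_on N N W j)) mod 2"
        by (simp add: sans_def K_def)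
      also have "(\<Sum>j=1..K. bitv (if j \<in> set_decode (Qs N) then 1 else 0) (files_on N N W j))
          = (\<Sum>j=1..K. bitv (if j \<in> set_decode (Qs N) then 1 else 0) (W j))"
        by (intro sum.cong refl) (simp add: files_on_def star_storage_def star_files_def K_def)
      finally show ?thesis .
    qed
    also have "\<dots> = (\<Sum>j=1..K. bitv (flp a r j) (W j)) mod 2"
    proof -
      have "(if j \<in> set_decode (Qs N) then 1 else 0) = flp a r j" if "j \<in> {1..K}" for j
      proof -
        have "flp a r j = 0 \<or> flp a r j = 1" using r01[OF that] r01[OF a'] unfolding flp_def by auto
        then show ?thesis unfolding C using that by auto
      qed
      then show ?thesis by (intro arg_cong[where f="\<lambda>x. x mod 2"] sum.cong refl) simp
    qed
    finally show ?thesis .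
  qed
  define s where "s = (\<Sum>j\<in>{1..K}-{a}. bitv (r j) (W j))"
  have sp: "(\<Sum>j=1..K. bitv (flp a r j) (W j)) = bitv (1 - r a) (W a) + s"
  proof -
    have "(\<Sum>j=1..K. bitv (flp a r j) (W j)) = bitv (flp a r a) (W a) + (\<Sum>j\<in>{1..K}-{a}. bitv (flp a r j) (W j))"
      using a' by (intro sum.remove) auto
    also have "(\<Sum>j\<in>{1..K}-{a}. bitv (flp a r j) (W j)) = s" unfolding s_def flp_def
      by (intro sum.cong refl) auto
    finally show ?thesis unfolding flp_def by simp
  qed
  have bB: "(As N + (\<Sum>j\<in>{1..N-1}-{a}. As j)) mod 2 = bitv (1 - r a) (W a)"
  proof -
    have "(\<Sum>j\<in>{1..N-1}-{a}. As j) = s" unfolding s_def K_def using Aj K_def by (intro sum.cong) auto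
    moreover have "bitv (1 - r a) (W a) \<in> {0,1}" by (rule bitv01)
    ultimately show ?thesis unfolding AN sp using mod2_aux by simp
  qed
  have bA: "As a = bitv (r a) (W a)" using Aj[OF a'] .
  have "length (W a) = 2" using W a' unfolding FS_def PiE_dflt_def K_def by auto
  then obtain x y where xy: "W a = [x, y]"
    by (auto simp: length_Suc_conv numeral_2_eq_2)
  have "sdec N Qs As = (if Qs a = 0 then [As a = 1, (As N + (\<Sum>j\<in>{1..N-1}-{a}. As j)) mod 2 = 1]
       else [(As N + (\<Sum>j\<in>{1..N-1}-{a}. As j)) mod 2 = 1, As a = 1])"
    unfolding sdec_def Let_def th by simp
  also have "\<dots> = W a" unfolding bB bA Qj[OF a']
    using r01[OF a'] xy by (auto simp: bitv_def)
  finally show ?thesis unfolding Qs_def As_def .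
qed


lemma valid: "N \<ge> 2 \<Longrightarrow> valid_star_scheme N 2 (qdist N) (sans N) (sdec N)"
proof -
  assume N: "N \<ge> 2"
  have fin: "finite (set_pmf (qdist N))" unfolding qdist_def using finite_Rset N by (simp add: set_pmf_of_set)
  have mf: "map_pmf fst (qdist N) = pmf_of_set {1..star_files N}"
    unfolding qdist_def map_pmf_comp star_files_def
    by (simp add: case_prod_beta map_fst_pair_pmf)
  have rel: "\<forall>((\<theta>, Q), W) \<in> set_pmf (joint N 2 (qdist N)).
        sdec N (all_queries N Q) (all_answers N (sans N) Q W) = W \<theta>"
  proof (intro ballI, clarify)
    fix th Q W assume "((th, Q), W) \<in> set_pmf (joint N 2 (qdist N))"
    then obtain a r W' where "((th, Q), W) = ((a, qf N a r), W')" "a \<in> {1..N-1}" "r \<in> Rset (N-1)" "W' \<in> FS (N-1)"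
      using set_joint N by blast
    then show "sdec N (all_queries N Q) (all_answers N (sans N) Q W) = W th"
      using reliable N by simp
  qed
  show ?thesis unfolding valid_star_scheme_def using fin mf rel privacy N by blast
qed

lemma rate: "N \<ge> 2 \<Longrightarrow> star_rate N 2 (qdist N) (sans N) = 2 / real N"
proof -
  assume N: "N \<ge> 2"
  have "ent (map_pmf (\<lambda>((\<theta>, Q), W). answer N (sans N) i Q W) (joint N 2 (qdist N))) = 1"
    if "i \<in> {1..N}" for i
    unfolding answer_unif[OF N that] by (simp add: ent_pmf_of_set)
  then show ?thesis unfolding star_rate_def by simp
qed

theorem theorem5:
  fixes N :: nat
  assumes "N \<ge> 2"
  shows "star_pir_capacity N \<ge> ereal (2 / real N)"
proof -
  have "ereal (star_rate N 2 (qdist N) (sans N)) \<in> {ereal (star_rate N L qd ans) | L qd ans dec.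
       L \<ge> 1 \<and> valid_star_scheme N L qd ans dec}"
    using valid[OF assms] by fastforce
  then show ?thesis unfolding star_pir_capacity_def rate[OF assms] by (rule Sup_upper)
qed

end
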